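(* For an integer $k \geq -1$ and real $b \geq 0$ define \[ J_k = J_k(b) = \int_{-1}^{1} (1-x^2)^{k/2} e^{bx}\, \mathrm{d}x. \] Then for every integer $d \geq 2$ and every $b \geq 0$: (a) $b^2 J_{d+1} = -d(d+1) J_{d-1} + (d+1)(d-1) J_{d-3}$; (b) $\dfrac{J_{d-3}}{J_{d-1}} \geq \dfrac{d}{d-1}\left(\dfrac12 + \sqrt{\dfrac14 + \dfrac{b^2}{d(d+2)}}\right)$; (c) $\dfrac{J_{d-1}}{J_{d+1}} \leq \dfrac{d+2}{d+1}\left(\dfrac12 + \sqrt{\dfrac14 + \dfrac{b^2}{d(d+2)}}\right)$; (d) $J_{d+1} J_{d-3} \geq J_{d-1}^2 \dfrac{d(d+1)}{(d-1)(d+2)}$. *)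

theory Defs
  imports "HOL-Analysis.Analysis"
begin

text \<open>J_k(b) = integral over [-1,1] of (1-x^2)^(k/2) e^(bx) dx, for integers k >= -1.
  For k = -1 the integrand is improper at the endpoints but Lebesgue (hence
  Henstock-Kurzweil) integrable; the value at x = +-1 is irrelevant.\<close>
definition J :: "int \<Rightarrow> real \<Rightarrow> real" where
  "J k b = integral {-1..1} (\<lambda>x::real. (1 - x\<^sup>2) powr (real_of_int k / 2) * exp (b * x))"

end

theory Submission
  imports Defs
begin

definition fJ :: "real \<Rightarrow> real \<Rightarrow> real \<Rightarrow> real" where
  "fJ p b x = (1 - x\<^sup>2) powr p * exp (b * x)"

lemma cont_fJ:
  assumes "p > 0"
  shows "continuous_on {-1..1} (fJ p b)"
proof -
  have c: "continuous_on {-1..1} (\<lambda>x::real. (1 - x\<^sup>2) powr p)"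
    by (rule continuous_on_powr') (use assms in \<open>auto intro!: continuous_intros simp: abs_square_le_1\<close>)
  show ?thesis unfolding fJ_def by (rule continuous_on_mult[OF c]) (intro continuous_intros)
qed

lemma int_fJ: "p > 0 \<Longrightarrow> fJ p b integrable_on {-1..1}"
  by (intro integrable_continuous_interval cont_fJ)

lemma int_xfJ: "p > 0 \<Longrightarrow> (\<lambda>x. x * fJ p b x) integrable_on {-1..1}"
  by (intro integrable_continuous_interval continuous_intros cont_fJ)

lemma interior_pos: "x \<in> {-1<..<1} \<Longrightarrow> 1 - x\<^sup>2 > (0::real)"
  by (auto simp: abs_square_less_1 less_iff_diff_less_0[symmetric])

lemma deriv_u:
  assumes "x \<in> {-1<..<1}"
  shows "((\<lambda>x. (1 - x\<^sup>2) powr q) has_real_derivative (q * (1-x\<^sup>2) powr (q-1) * (-2*x))) (at x)"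
  using interior_pos[OF assms]
  by (auto intro!: derivative_eq_intros)

lemma fJ_end: "q > 0 \<Longrightarrow> fJ q b 1 = 0" "q > 0 \<Longrightarrow> fJ q b (-1) = 0"
  by (auto simp: fJ_def)

lemma deriv_fJ:
  assumes "x \<in> {-1<..<1}"
  shows "(fJ q b has_real_derivative ((1 - x\<^sup>2) powr q * (b * exp (b*x)) + q * (1-x\<^sup>2) powr (q-1) * (-2*x) * exp (b*x))) (at x)"
  unfolding fJ_def
proof (rule DERIV_mult'[OF deriv_u[OF assms]])
  show "((\<lambda>x. exp (b * x)) has_real_derivative b * exp (b * x)) (at x)"
    by (auto intro!: derivative_eq_intros)
qed

lemma S1:
  assumes "q > 1"
  shows "b * integral {-1..1} (fJ q b) = 2 * q * integral {-1..1} (\<lambda>x. x * fJ (q-1) b x)"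
proof -
  have "((\<lambda>x. b * fJ q b x - 2*q*(x * fJ (q-1) b x)) has_integral (fJ q b 1 - fJ q b (-1))) {-1..1}"
  proof (rule fundamental_theorem_of_calculus_interior)
    show "continuous_on {-1..1} (fJ q b)" using assms by (intro cont_fJ) auto
  next
    fix x :: real assume x: "x \<in> {-1<..<1}"
    show "(fJ q b has_vector_derivative b * fJ q b x - 2 * q * (x * fJ (q - 1) b x)) (at x)"
      unfolding has_real_derivative_iff_has_vector_derivative[symmetric]
      using deriv_fJ[OF x, of q b] assms interior_pos[OF x]
      by (simp add: fJ_def algebra_simps)
  qed simp
  then have "((\<lambda>x. b * fJ q b x - 2*q*(x * fJ (q-1) b x)) has_integral 0) {-1..1}"
    using assms by (simp add: fJ_end)
  moreover have i1: "(fJ q b has_integral integral {-1..1} (fJ q b)) {-1..1}"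
    using assms by (intro integrable_integral int_fJ) simp
  moreover have i2: "((\<lambda>x. x * fJ (q-1) b x) has_integral integral {-1..1} (\<lambda>x. x * fJ (q-1) b x)) {-1..1}"
    using assms by (intro integrable_integral int_xfJ) simp
  ultimately have "0 = b * integral {-1..1} (fJ q b) - 2 * q * integral {-1..1} (\<lambda>x. x * fJ (q-1) b x)"
    using has_integral_unique has_integral_diff[OF has_integral_mult_right[OF i1, of b] has_integral_mult_right[OF i2, of "2*q"]]
    by blast
  then show ?thesis by simp
qed

lemma S2:
  assumes "p > 0"
  shows "(fJ (p-1) b has_integral ((2*p+1) * integral {-1..1} (fJ p b) + b * integral {-1..1} (\<lambda>x. x * fJ p b x)) / (2*p)) {-1..1}"
proof -
  let ?H = "\<lambda>x. (2*p+1) * fJ p b x + b * (x * fJ p b x) - 2*p * fJ (p-1) b x"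
  have "(?H has_integral ((\<lambda>x. x * fJ p b x) 1 - (\<lambda>x. x * fJ p b x) (-1))) {-1..1}"
  proof (rule fundamental_theorem_of_calculus_interior)
    show "continuous_on {-1..1} (\<lambda>x. x * fJ p b x)" using assms by (intro continuous_intros cont_fJ) auto
  next
    fix x :: real assume x: "x \<in> {-1<..<1}"
    have u: "1 - x\<^sup>2 > 0" using interior_pos[OF x] .
    have e: "(1 - x\<^sup>2) powr p = (1 - x\<^sup>2) * (1 - x\<^sup>2) powr (p-1)"
      using u by (simp add: powr_mult_base)
    have "((\<lambda>x. x * fJ p b x) has_real_derivative x * ((1 - x\<^sup>2) powr p * (b * exp (b*x)) + p * (1-x\<^sup>2) powr (p-1) * (-2*x) * exp (b*x)) + 1 * fJ p b x) (at x)"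
      by (intro DERIV_mult' deriv_fJ x DERIV_ident)
    moreover have "x * ((1 - x\<^sup>2) powr p * (b * exp (b*x)) + p * (1-x\<^sup>2) powr (p-1) * (-2*x) * exp (b*x)) + 1 * fJ p b x = ?H x"
      unfolding fJ_def e by (simp add: algebra_simps power2_eq_square)
    ultimately show "((\<lambda>x. x * fJ p b x) has_vector_derivative ?H x) (at x)"
      unfolding has_real_derivative_iff_has_vector_derivative[symmetric] by simp
  qed simp
  then have h0: "(?H has_integral 0) {-1..1}"
    using assms by (simp add: fJ_end)
  have i1: "(fJ p b has_integral integral {-1..1} (fJ p b)) {-1..1}"
    using assms by (intro integrable_integral int_fJ) simp
  have i2: "((\<lambda>x. x * fJ p b x) has_integral integral {-1..1} (\<lambda>x. x * fJ p b x)) {-1..1}"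
    using assms by (intro integrable_integral int_xfJ) simp
  have "((\<lambda>x. ((2*p+1) * fJ p b x + b * (x * fJ p b x) - ?H x) / (2*p)) has_integral
     ((2*p+1) * integral {-1..1} (fJ p b) + b * integral {-1..1} (\<lambda>x. x * fJ p b x) - 0) / (2*p)) {-1..1}"
    by (rule has_integral_divide[OF has_integral_diff[OF has_integral_add[OF has_integral_mult_right[OF i1] has_integral_mult_right[OF i2]] h0]])
  moreover have "(\<lambda>x. ((2*p+1) * fJ p b x + b * (x * fJ p b x) - ?H x) / (2*p)) = fJ (p-1) b"
    using assms by (auto simp: field_simps)
  ultimately show ?thesis by simp
qed

lemma dInt:
  assumes "p > 0"
  shows "((\<lambda>b. integral {-1..1} (fJ p b)) has_real_derivative integral {-1..1} (\<lambda>x. x * fJ p b x)) (at b)"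
proof -
  have c: "continuous_on (UNIV \<times> {-1..1}) (\<lambda>z::real\<times>real. (1 - (snd z)\<^sup>2) powr p)"
    by (rule continuous_on_powr') (use assms in \<open>auto intro!: continuous_intros simp: abs_square_le_1\<close>)
  have c2: "continuous_on (UNIV \<times> {-1..1}) (\<lambda>(b, t). t * fJ p b t)"
    unfolding fJ_def split_beta
    by (intro continuous_on_mult continuous_on_mult[OF c] continuous_intros)
  have "((\<lambda>b. integral (cbox (-1) 1) (fJ p b)) has_real_derivative integral (cbox (-1) 1) (\<lambda>x. x * fJ p b x)) (at b within UNIV)"
  proof (rule leibniz_rule_field_derivative[where fx = "\<lambda>b t. t * fJ p b t"])
    fix b' t :: real
    show "((\<lambda>b. fJ p b t) has_real_derivative t * fJ p b' t) (at b' within UNIV)"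
      unfolding fJ_def by (auto intro!: derivative_eq_intros)
  next
    fix b' :: real show "fJ p b' integrable_on cbox (-1) 1"
      using int_fJ[OF assms] by (simp add: cbox_interval)
  next
    show "continuous_on (UNIV \<times> cbox (- 1) 1) (\<lambda>(b, t). t * fJ p b t)"
      using c2 by (simp add: cbox_interval)
  qed auto
  then show ?thesis by (simp add: cbox_interval)
qed

lemma A_pos:
  assumes "p > 0"
  shows "integral {-1..1} (fJ p b) > 0"
proof -
  define c where "c = (3/4) powr p * exp (- \<bar>b\<bar>)"
  have cpos: "c > 0" unfolding c_def by simp
  have fnn: "\<And>x. fJ p b x \<ge> 0" unfolding fJ_def by simp
  have lb: "\<And>x. x \<in> {-1/2..1/2} \<Longrightarrow> c \<le> fJ p b x"
  proof -
    fix x :: real assume x: "x \<in> {-1/2..1/2}"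
    have ax: "\<bar>x\<bar> \<le> 1/2" using x by auto
    have "\<bar>x\<bar>\<^sup>2 \<le> (1/2)\<^sup>2" by (rule power_mono[OF ax]) simp
    then have "x\<^sup>2 \<le> 1/4" by (simp add: power2_eq_square)
    then have "(3/4) powr p \<le> (1 - x\<^sup>2) powr p" using assms by (intro powr_mono2) auto
    moreover have "exp (- \<bar>b\<bar>) \<le> exp (b * x)"
    proof -
      have "\<bar>b\<bar> * \<bar>x\<bar> \<le> \<bar>b\<bar> * 1" using ax by (intro mult_left_mono) auto
      then have "\<bar>b * x\<bar> \<le> \<bar>b\<bar>" by (simp add: abs_mult)
      then show ?thesis by simp
    qed
    ultimately show "c \<le> fJ p b x" unfolding c_def fJ_def
      by (intro mult_mono) auto
  qed
  have sub: "fJ p b integrable_on {-1/2..1/2::real}"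
    by (rule integrable_on_subinterval[OF int_fJ[OF assms]]) auto
  have "integral {-1/2..1/2::real} (\<lambda>x. c) \<le> integral {-1/2..1/2} (fJ p b)"
    using lb by (intro integral_le sub) auto
  also have "\<dots> \<le> integral {-1..1} (fJ p b)"
    using fnn by (intro integral_subset_le sub int_fJ[OF assms]) auto
  finally show ?thesis using cpos by simp
qed

lemma alg:
  fixes D A B C b :: real
  assumes D: "D \<ge> 2" and A: "A > 0" and B: "B > 0" and b: "b \<ge> 0"
    and ha: "b\<^sup>2 * B = - (D*(D+1)) * A + (D+1)*(D-1) * C"
    and hg: "D*(D+1)\<^sup>2*A\<^sup>2 \<le> (D+2)*(D*(D+1)*A*B + b\<^sup>2*B\<^sup>2)"
  shows "C / A \<ge> D/(D-1) * (1/2 + sqrt (1/4 + b\<^sup>2/(D*(D+2))))"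
    and "A / B \<le> (D+2)/(D+1) * (1/2 + sqrt (1/4 + b\<^sup>2/(D*(D+2))))"
    and "B * C \<ge> A\<^sup>2 * (D*(D+1)/((D-1)*(D+2)))"
proof -
  define q where "q = b\<^sup>2/(D*(D+2))"
  have qD: "q * (D*(D+2)) = b\<^sup>2" using D unfolding q_def by simp
  have hE: "(D+1)*(D-1)*C = b\<^sup>2*B + D*(D+1)*A" 
  proof -
    have "- (D*(D+1))*A = - (D*(D+1)*A)" by simp
    with ha show ?thesis by linarith
  qed
  define G where "G = (D+2)*(D*(D+1)*A*B + b\<^sup>2*B\<^sup>2) - D*(D+1)\<^sup>2*A\<^sup>2"
  have G0: "G \<ge> 0" using hg unfolding G_def by simp
  {
    define X where "X = (D+2)*B"
    have X0: "X > 0" using D B unfolding X_def by simp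
    define w where "w = A/B * ((D+1)/(D+2))"
    have nzw: "D+1 \<noteq> 0" "D+2 \<noteq> 0" "B \<noteq> 0" using D B by auto
    have gen: "\<And>E F. E \<noteq> 0 \<Longrightarrow> A/B * (F/E) * (E*B) = F*A" using nzw by (simp add: field_simps)
    have wX: "w * X = (D+1)*A" using gen[OF nzw(2), of "D+1"] unfolding w_def X_def .
    have "(w\<^sup>2 - w - q) * (D*(D+2)*X\<^sup>2) = D*(D+2)*(w*X)\<^sup>2 - D*(D+2)*(w*X)*X - (q*(D*(D+2)))*X\<^sup>2"
      by (simp add: algebra_simps power2_eq_square)
    also have "\<dots> = D*(D+2)*((D+1)*A)\<^sup>2 - D*(D+2)*((D+1)*A)*((D+2)*B) - b\<^sup>2*((D+2)*B)\<^sup>2"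
      by (simp only: wX qD) (simp add: X_def)
    also have "\<dots> = - (D+2) * G" unfolding G_def by (simp add: algebra_simps power2_eq_square)
    also have "\<dots> \<le> 0" using G0 D by (simp add: mult_nonpos_nonneg)
    finally have "w\<^sup>2 - w - q \<le> 0" using D X0
      by (simp add: mult_le_0_iff)
    then have "(w - 1/2)\<^sup>2 \<le> 1/4 + q" by (simp add: power2_eq_square algebra_simps)
    then have "w - 1/2 \<le> sqrt (1/4 + q)" by (rule real_le_rsqrt)
    then have "w \<le> 1/2 + sqrt (1/4 + q)" by simp
    then have "(D+2)/(D+1) * w \<le> (D+2)/(D+1) * (1/2 + sqrt (1/4 + q))"
      using D by (intro mult_left_mono) auto
    moreover have "(D+2)/(D+1) * w = A / B" unfolding w_def
    proof -
      have "(D+2)/(D+1) * (A/B * ((D+1)/(D+2))) = A/B * ((D+2)/(D+1) * ((D+1)/(D+2)))" by (simp only: mult_ac)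
      also have "(D+2)/(D+1) * ((D+1)/(D+2)) = 1" using nzw by simp
      finally show "(D+2)/(D+1) * (A/B * ((D+1)/(D+2))) = A / B" by simp
    qed
    ultimately show "A / B \<le> (D+2)/(D+1) * (1/2 + sqrt (1/4 + b\<^sup>2/(D*(D+2))))" unfolding q_def by simp
  }
  {
    have c: "(D*(D+1)/((D-1)*(D+2))) * ((D-1)*(D+2)) = D*(D+1)" using D by simp
    have "(B * C - A\<^sup>2 * (D*(D+1)/((D-1)*(D+2)))) * ((D+1)*(D-1)*(D+2))
        = (D+2)*B*((D+1)*(D-1)*C) - (D+1)*A\<^sup>2 * ((D*(D+1)/((D-1)*(D+2))) * ((D-1)*(D+2)))"
      by (simp add: algebra_simps)
    also have "\<dots> = (D+2)*B*(b\<^sup>2*B + D*(D+1)*A) - (D+1)*A\<^sup>2 * (D*(D+1))" unfolding hE c ..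
    also have "\<dots> = G" unfolding G_def by (simp add: algebra_simps power2_eq_square)
    finally have "(B * C - A\<^sup>2 * (D*(D+1)/((D-1)*(D+2)))) * ((D+1)*(D-1)*(D+2)) \<ge> 0" using G0 by simp
    moreover have "(D+1)*(D-1)*(D+2) > 0" using D by simp
    ultimately have "B * C - A\<^sup>2 * (D*(D+1)/((D-1)*(D+2))) \<ge> 0"
      by (simp add: zero_le_mult_iff)
    then show "B * C \<ge> A\<^sup>2 * (D*(D+1)/((D-1)*(D+2)))" by simp
  }
  {
    define Y where "Y = D*A"
    have Y0: "Y > 0" using D A unfolding Y_def by simp
    define t where "t = C/A * ((D-1)/D)"
    have nzt: "D-1 \<noteq> 0" "D \<noteq> 0" "A \<noteq> 0" using D A by auto
    have gen: "\<And>E F. E \<noteq> 0 \<Longrightarrow> C/A * (F/E) * (E*A) = F*C" using nzt by (simp add: field_simps)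
    have tY: "t * Y = (D-1)*C" using gen[OF nzt(2), of "D-1"] unfolding t_def Y_def .
    have t1Y: "(D+1)*((t-1)*Y) = b\<^sup>2*B"
    proof -
      have e1: "(t-1)*Y = (D-1)*C - Y" by (simp add: left_diff_distrib tY)
      have "(D+1)*((t-1)*Y) = (D+1)*(D-1)*C - (D+1)*(D*A)"
        unfolding e1 by (simp add: Y_def right_diff_distrib mult.assoc)
      then show ?thesis using hE by simp
    qed
    have "b\<^sup>2*B \<ge> 0" using B by simp
    then have h1: "(D+1)*((t-1)*Y) \<ge> 0" using t1Y by simp
    have "D+1 > 0" using D by simp
    then have "(t-1)*Y \<ge> 0" using h1 by (simp add: zero_le_mult_iff)
    then have "t \<ge> 1" using Y0 by (simp add: zero_le_mult_iff)
    have "(t*(t-1) - q) * (D*(D+2)*Y\<^sup>2*(D+1)\<^sup>2)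
        = D*(D+2)*(D+1)*(t*Y)*((D+1)*((t-1)*Y)) - (q*(D*(D+2)))*(D+1)\<^sup>2*Y\<^sup>2"
      by (simp add: algebra_simps power2_eq_square)
    also have "\<dots> = D*(D+2)*((D+1)*(D-1)*C)*(b\<^sup>2*B) - b\<^sup>2*(D+1)\<^sup>2*(D*A)\<^sup>2"
      by (simp only: tY t1Y qD) (simp add: Y_def algebra_simps)
    also have "\<dots> = D*(D+2)*(b\<^sup>2*B + D*(D+1)*A)*(b\<^sup>2*B) - b\<^sup>2*(D+1)\<^sup>2*(D*A)\<^sup>2"
      unfolding hE ..
    also have "\<dots> = b\<^sup>2 * D * G" unfolding G_def by (simp add: algebra_simps power2_eq_square)
    finally have eq: "(t*(t-1) - q) * (D*(D+2)*Y\<^sup>2*(D+1)\<^sup>2) = b\<^sup>2 * D * G" .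
    have "b\<^sup>2 * D * G \<ge> 0" using G0 D by (intro mult_nonneg_nonneg) auto
    then have "(t*(t-1) - q) * (D*(D+2)*Y\<^sup>2*(D+1)\<^sup>2) \<ge> 0" using eq by linarith
    moreover have "D*(D+2)*Y\<^sup>2*(D+1)\<^sup>2 > 0" using D Y0 by simp
    ultimately have "t*(t-1) - q \<ge> 0" by (simp add: zero_le_mult_iff)
    then have "1/4 + q \<le> (t - 1/2)\<^sup>2" by (simp add: power2_eq_square algebra_simps)
    then have "sqrt (1/4 + q) \<le> sqrt ((t - 1/2)\<^sup>2)" by (rule real_sqrt_le_mono)
    also have "\<dots> = t - 1/2" using \<open>t \<ge> 1\<close> by simp
    finally have "1/2 + sqrt (1/4 + q) \<le> t" by simp
    then have "D/(D-1) * (1/2 + sqrt (1/4 + q)) \<le> D/(D-1) * t"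
      using D by (intro mult_left_mono) auto
    moreover have "D/(D-1) * t = C / A" unfolding t_def
    proof -
      have "D/(D-1) * (C/A * ((D-1)/D)) = C/A * (D/(D-1) * ((D-1)/D))" by (simp only: mult_ac)
      also have "D/(D-1) * ((D-1)/D) = 1" using nzt by simp
      finally show "D/(D-1) * (C/A * ((D-1)/D)) = C / A" by simp
    qed
    ultimately show "C / A \<ge> D/(D-1) * (1/2 + sqrt (1/4 + b\<^sup>2/(D*(D+2))))" unfolding q_def by simp
  }
qed

lemma ode_test:
  fixes A B K L :: "real \<Rightarrow> real" and D :: real and N :: nat
  assumes dA: "\<And>t. (A has_real_derivative K t) (at t)"
    and dB: "\<And>t. (B has_real_derivative L t) (at t)"
  shows "((\<lambda>t. t^N * ((D+2)*(D*(D+1)*A t*B t + t\<^sup>2*(B t)\<^sup>2) - D*(D+1)\<^sup>2*(A t)\<^sup>2)) has_real_derivative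
     real N * t^(N-1) * ((D+2)*(D*(D+1)*A t*B t + t\<^sup>2*(B t)\<^sup>2) - D*(D+1)\<^sup>2*(A t)\<^sup>2)
     + t^N * ((D+2)*(D*(D+1)*(K t*B t + A t*L t) + (2*t*(B t)\<^sup>2 + t\<^sup>2*(2*B t*L t))) - D*(D+1)\<^sup>2*(2*A t*K t))) (at t)"
  by (rule derivative_eq_intros dA dB refl | simp add: algebra_simps)+

lemma ode_identity:
  fixes D t A B K L :: real
  assumes hK: "t*B = (D+1)*K" and hL: "t*L = (D+1)*A - (D+2)*B"
  shows "(D+2)*((D+2)*(D*(D+1)*A*B + t\<^sup>2*B\<^sup>2) - D*(D+1)\<^sup>2*A\<^sup>2) + t*((D+2)*(D*(D+1)*(K*B + A*L) + (2*t*B\<^sup>2 + t\<^sup>2*(2*B*L))) - D*(D+1)\<^sup>2*(2*A*K)) = 4*(D+1)*t\<^sup>2*A*B"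
proof -
  have "(D+2)*((D+2)*(D*(D+1)*A*B + t\<^sup>2*B\<^sup>2) - D*(D+1)\<^sup>2*A\<^sup>2) + t*((D+2)*(D*(D+1)*(K*B + A*L) + (2*t*B\<^sup>2 + t\<^sup>2*(2*B*L))) - D*(D+1)\<^sup>2*(2*A*K))
     = (D+2)*((D+2)*(D*(D+1)*A*B + t\<^sup>2*B\<^sup>2) - D*(D+1)\<^sup>2*A\<^sup>2) + ((D+1)*(t*K))*((D+2)*D*B - 2*D*(D+1)*A) + (D+2)*D*(D+1)*A*(t*L) + (D+2)*(2*t\<^sup>2*B\<^sup>2 + 2*t\<^sup>2*B*(t*L))"
    by (simp add: algebra_simps power2_eq_square)
  also have "(D+1)*(t*K) = t*(t*B)" using hK by (simp add: algebra_simps)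
  also have "(D+2)*((D+2)*(D*(D+1)*A*B + t\<^sup>2*B\<^sup>2) - D*(D+1)\<^sup>2*A\<^sup>2) + (t*(t*B))*((D+2)*D*B - 2*D*(D+1)*A) + (D+2)*D*(D+1)*A*(t*L) + (D+2)*(2*t\<^sup>2*B\<^sup>2 + 2*t\<^sup>2*B*(t*L))
     = 4*(D+1)*t\<^sup>2*A*B"
    unfolding hL by (simp add: algebra_simps power2_eq_square)
  finally show ?thesis .
qed

theorem lemma2:
  fixes d :: int and b :: real
  assumes "d \<ge> 2" and "b \<ge> 0"
  shows "b\<^sup>2 * J (d+1) b = - real_of_int (d*(d+1)) * J (d-1) b + real_of_int ((d+1)*(d-1)) * J (d-3) b \<and>
    J (d-3) b / J (d-1) b \<ge> real_of_int d / real_of_int (d-1) * (1/2 + sqrt (1/4 + b\<^sup>2 / real_of_int (d*(d+2)))) \<and>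
    J (d-1) b / J (d+1) b \<le> real_of_int (d+2) / real_of_int (d+1) * (1/2 + sqrt (1/4 + b\<^sup>2 / real_of_int (d*(d+2)))) \<and>
    J (d+1) b * J (d-3) b \<ge> (J (d-1) b)\<^sup>2 * (real_of_int (d*(d+1)) / real_of_int ((d-1)*(d+2)))"
proof -
  define D where "D = real_of_int d"
  define p where "p = (D-1)/2"
  have D2: "D \<ge> 2" using assms(1) unfolding D_def by simp
  have p0: "p > 0" using D2 unfolding p_def by simp
  define A where "A = (\<lambda>t. integral {-1..1} (fJ p t))"
  define B where "B = (\<lambda>t. integral {-1..1} (fJ (p+1) t))"
  define K where "K = (\<lambda>t. integral {-1..1} (\<lambda>x. x * fJ p t x))"
  define L where "L = (\<lambda>t. integral {-1..1} (\<lambda>x. x * fJ (p+1) t x))"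
  define C where "C = integral {-1..1} (fJ (p-1) b)"
  have e1: "real_of_int (d-1)/2 = p" unfolding p_def D_def by simp
  have e2: "real_of_int (d+1)/2 = p+1" unfolding p_def D_def by (simp add: field_simps)
  have e3: "real_of_int (d-3)/2 = p-1" unfolding p_def D_def by (simp add: field_simps)
  have JA: "J (d-1) b = A b" unfolding J_def A_def fJ_def e1 ..
  have JB: "J (d+1) b = B b" unfolding J_def B_def fJ_def e2 ..
  have JC: "J (d-3) b = C" unfolding J_def C_def fJ_def e3 ..
  have Apos: "\<And>t. A t > 0" unfolding A_def using A_pos p0 by simp
  have Bpos: "\<And>t. B t > 0" unfolding B_def using A_pos p0 by simp
  have hK: "\<And>t. t * B t = (D+1) * K t"
  proof -
    fix t
    have "t * B t = 2*(p+1) * integral {-1..1} (\<lambda>x. x * fJ (p+1-1) t x)"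
      unfolding B_def using p0 by (intro S1) simp
    then show "t * B t = (D+1) * K t" unfolding K_def p_def by (simp add: field_simps)
  qed
  have hL: "\<And>t. t * L t = (D+1) * A t - (D+2) * B t"
  proof -
    fix t
    have "(fJ (p+1-1) t has_integral ((2*(p+1)+1) * B t + t * L t) / (2*(p+1))) {-1..1}"
      unfolding B_def L_def using p0 by (intro S2) simp
    then have "A t = ((2*(p+1)+1) * B t + t * L t) / (2*(p+1))"
      unfolding A_def by (simp add: integral_unique)
    then show "t * L t = (D+1) * A t - (D+2) * B t" using p0 unfolding p_def by (simp add: field_simps)
  qed
  have hC: "(D-1) * C = D * A b + b * K b"
  proof -
    have "(fJ (p-1) b has_integral ((2*p+1) * A b + b * K b) / (2*p)) {-1..1}"
      unfolding A_def K_def using p0 by (intro S2) simp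
    then have "C = ((2*p+1) * A b + b * K b) / (2*p)" unfolding C_def by (simp add: integral_unique)
    then show ?thesis using p0 unfolding p_def by (simp add: field_simps)
  qed
  have ha: "b\<^sup>2 * B b = - (D*(D+1)) * A b + (D+1)*(D-1) * C"
  proof -
    have "b\<^sup>2 * B b = b * (t * B t)" if "t = b" for t using that by (simp add: power2_eq_square)
    then have "b\<^sup>2 * B b = b * ((D+1) * K b)" using hK by simp
    also have "\<dots> = (D+1) * (b * K b)" by simp
    also have "b * K b = (D-1) * C - D * A b" using hC by simp
    finally show ?thesis by (simp add: algebra_simps)
  qed
  define g where "g = (\<lambda>t. (D+2)*(D*(D+1)*A t*B t + t\<^sup>2*(B t)\<^sup>2) - D*(D+1)\<^sup>2*(A t)\<^sup>2)"
  define M where "M = nat (d+1)"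
  have MD: "real (Suc M) = D+2" unfolding M_def D_def using assms(1) by simp
  have dA: "\<And>t. (A has_real_derivative K t) (at t)" unfolding A_def K_def using dInt p0 by blast
  have dB: "\<And>t. (B has_real_derivative L t) (at t)" unfolding B_def L_def using dInt[of "p+1"] p0 by simp
  have dF: "\<And>t. ((\<lambda>t. t^(Suc M) * g t) has_real_derivative t^M * (4*(D+1)*t\<^sup>2*A t*B t)) (at t)"
  proof -
    fix t
    have "((\<lambda>t. t^(Suc M) * g t) has_real_derivative
     real (Suc M) * t^(Suc M-1) * g t
     + t^(Suc M) * ((D+2)*(D*(D+1)*(K t*B t + A t*L t) + (2*t*(B t)\<^sup>2 + t\<^sup>2*(2*B t*L t))) - D*(D+1)\<^sup>2*(2*A t*K t))) (at t)"
      unfolding g_def using ode_test[OF dA dB, of "Suc M" D t] by simp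
    moreover have "real (Suc M) * t^(Suc M-1) * g t
     + t^(Suc M) * ((D+2)*(D*(D+1)*(K t*B t + A t*L t) + (2*t*(B t)\<^sup>2 + t\<^sup>2*(2*B t*L t))) - D*(D+1)\<^sup>2*(2*A t*K t))
      = t^M * ((D+2) * g t + t * ((D+2)*(D*(D+1)*(K t*B t + A t*L t) + (2*t*(B t)\<^sup>2 + t\<^sup>2*(2*B t*L t))) - D*(D+1)\<^sup>2*(2*A t*K t)))"
      unfolding MD by (simp add: algebra_simps)
    moreover have "(D+2) * g t + t * ((D+2)*(D*(D+1)*(K t*B t + A t*L t) + (2*t*(B t)\<^sup>2 + t\<^sup>2*(2*B t*L t))) - D*(D+1)\<^sup>2*(2*A t*K t))
      = 4*(D+1)*t\<^sup>2*A t*B t"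
      unfolding g_def by (rule ode_identity[OF hK hL])
    ultimately show "((\<lambda>t. t^(Suc M) * g t) has_real_derivative t^M * (4*(D+1)*t\<^sup>2*A t*B t)) (at t)"
      by simp
  qed
  have g0: "g b \<ge> 0"
  proof (cases "b = 0")
    case True
    have "0 * L 0 = (D+1) * A 0 - (D+2) * B 0" using hL[of 0] .
    then have "(D+1) * A 0 = (D+2) * B 0" by simp
    have "g 0 = D*(D+1)*A 0 * ((D+2)*B 0 - (D+1)*A 0)" unfolding g_def by (simp add: algebra_simps power2_eq_square)
    also have "\<dots> = 0" using \<open>(D+1) * A 0 = (D+2) * B 0\<close> by simp
    finally show ?thesis using True by simp
  next
    case False
    then have bpos: "b > 0" using assms(2) by simp
    have "(\<lambda>t. t^(Suc M) * g t) 0 \<le> (\<lambda>t. t^(Suc M) * g t) b"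
    proof (rule DERIV_nonneg_imp_increasing_open[of 0 b "\<lambda>t. t^(Suc M) * g t"])
      show "0 \<le> b" using assms(2) .
    next
      fix x :: real assume "0 < x" "x < b"
      then show "\<exists>y. ((\<lambda>t. t^(Suc M) * g t) has_real_derivative y) (at x) \<and> 0 \<le> y"
        using dF[of x] D2 Apos[of x] Bpos[of x]
        by (intro exI[of _ "x^M * (4*(D+1)*x\<^sup>2*A x*B x)"]) simp
    next
      show "continuous_on {0..b} (\<lambda>t. t^(Suc M) * g t)"
        using dF by (intro continuous_at_imp_continuous_on ballI DERIV_isCont) blast
    qed
    then have "b^(Suc M) * g b \<ge> 0" by simp
    moreover have "b^(Suc M) > 0" using bpos by simp
    ultimately show ?thesis by (simp add: zero_le_mult_iff)
  qed
  have hg: "D*(D+1)\<^sup>2*(A b)\<^sup>2 \<le> (D+2)*(D*(D+1)*A b*B b + b\<^sup>2*(B b)\<^sup>2)"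
    using g0 unfolding g_def by simp
  note r = alg[OF D2 Apos[of b] Bpos[of b] assms(2) ha hg]
  have c1: "real_of_int (d*(d+1)) = D*(D+1)" "real_of_int ((d+1)*(d-1)) = (D+1)*(D-1)"
    "real_of_int (d*(d+2)) = D*(D+2)" "real_of_int ((d-1)*(d+2)) = (D-1)*(D+2)"
    "real_of_int (d-1) = D-1" "real_of_int (d+1) = D+1" "real_of_int (d+2) = D+2" "real_of_int d = D"
    unfolding D_def by simp_all
  show ?thesis unfolding JA JB JC c1 using r ha by (simp add: mult.commute)
qed

end
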